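(* The associated metric $\tilde g$ is Killing (i.e. $\tilde g([x,y],z)=\tilde g(x,[y,z])$ for all $x,y,z\in\mathfrak l$) if and only if $(L,\varphi,\xi,\eta,g)$ belongs to $\mathcal{F}_8\oplus\mathcal{F}_9\oplus\mathcal{F}_{10}$ with $2\lambda=\mu=\nu$, where $\lambda=F_{101}$, $\mu=F_{102}$, $\nu=F_{011}$. Equivalently, $\tilde g$ is Killing iff $C_{12}^0=-C_{01}^1=C_{02}^2$ and all other $C_{ij}^k$ ($i<j$) vanish.
   Context: Let $L$ be a 3-dimensional real connected Lie group with Lie algebra $\mathfrak l$, and let $\{E_0,E_1,E_2\}$ be a basis of left-invariant vector fields, with $[E_i,E_j]=C_{ij}^kE_k$. Define the left-invariant almost contact structure $(\varphi,\xi,\eta)$ by $\varphi E_0=0$, $\varphi E_1=E_2$, $\varphi E_2=-E_1$, $\xi=E_0$, $\eta(E_0)=1$, $\eta(E_1)=\eta(E_2)=0$, and the left-invariant pseudo-Riemannian metric $g$ by $g(E_0,E_0)=g(E_1,E_1)=-g(E_2,E_2)=1$, $g(E_i,E_j)=0$ for $i\neq j$. The associated metric is $\tilde g(x,y)=g(x,\varphi y)+\eta(x)\eta(y)$. Let $\nabla$ be the Levi-Civita connection of $g$, $F(x,y,z)=g((\nabla_x\varphi)y,z)$, and $F_{ijk}=F(E_i,E_j,E_k)$. The manifold belongs to $\mathcal{F}_8\oplus\mathcal{F}_9\oplus\mathcal{F}_{10}$ iff all $F_{ijk}$ vanish except possibly $F_{101}=F_{110}=F_{202}=F_{220}=:\lambda$,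 $F_{102}=F_{120}=-F_{201}=-F_{210}=:\mu$, and $F_{011}=F_{022}=:\nu$ (these are respectively the $\mathcal{F}_8$, $\mathcal{F}_9$, $\mathcal{F}_{10}$ parts). *)

theory Defs
  imports Main "HOL-Analysis.Analysis"
begin

text \<open>A 3-dimensional real Lie algebra with basis E0, E1, E2, given by structure
constants C i j k (so that [E_i,E_j] = sum_k C i j k E_k), indices 0,1,2.
Elements of the Lie algebra are coefficient functions x :: nat => real
(only the values at 0,1,2 matter).\<close>

definition is_structure_constants :: "(nat \<Rightarrow> nat \<Rightarrow> nat \<Rightarrow> real) \<Rightarrow> bool" where
  "is_structure_constants C \<longleftrightarrow>
     (\<forall>i<3. \<forall>j<3. \<forall>k<3. C i j k = - C j i k) \<and>
     (\<forall>i<3. \<forall>j<3. \<forall>k<3. \<forall>m<3.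
        (\<Sum>l<3. C i j l * C l k m + C j k l * C l i m + C k i l * C l j m) = 0)"

definition basis_vec :: "nat \<Rightarrow> nat \<Rightarrow> real" ("E") where
  "E i = (\<lambda>k. if k = i then 1 else 0)"

definition lbr :: "(nat \<Rightarrow> nat \<Rightarrow> nat \<Rightarrow> real) \<Rightarrow> (nat \<Rightarrow> real) \<Rightarrow> (nat \<Rightarrow> real) \<Rightarrow> (nat \<Rightarrow> real)" where
  "lbr C x y = (\<lambda>k. \<Sum>i<3. \<Sum>j<3. x i * y j * C i j k)"

definition sgn3 :: "nat \<Rightarrow> real" where
  "sgn3 i = (if i = 2 then -1 else 1)"

definition gm :: "(nat \<Rightarrow> real) \<Rightarrow> (nat \<Rightarrow> real) \<Rightarrow> real" where
  "gm x y = (\<Sum>i<3. sgn3 i * x i * y i)"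

definition phi :: "(nat \<Rightarrow> real) \<Rightarrow> (nat \<Rightarrow> real)" where
  "phi x = (\<lambda>k. if k = 1 then - x 2 else if k = 2 then x 1 else 0)"

definition eta :: "(nat \<Rightarrow> real) \<Rightarrow> real" where
  "eta x = x 0"

definition xi :: "nat \<Rightarrow> real" where
  "xi = E 0"

definition assoc_metric :: "(nat \<Rightarrow> real) \<Rightarrow> (nat \<Rightarrow> real) \<Rightarrow> real" where
  "assoc_metric x y = gm x (phi y) + eta x * eta y"

text \<open>Levi-Civita connection of the left-invariant metric on left-invariant fields,
via the Koszul formula
  2 g(nabla_x y, z) = g([x,y],z) - g([y,z],x) + g([z,x],y).\<close>
definition lc_nabla :: "(nat \<Rightarrow> nat \<Rightarrow> nat \<Rightarrow> real) \<Rightarrow> (nat \<Rightarrow> real) \<Rightarrow> (nat \<Rightarrow> real) \<Rightarrow> (nat \<Rightarrow> real)" where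
  "lc_nabla C x y = (\<lambda>k. if k < 3 then sgn3 k * ((gm (lbr C x y) (E k) - gm (lbr C y (E k)) x
                        + gm (lbr C (E k) x) y) / 2) else 0)"

text \<open>F(x,y,z) = g((nabla_x phi) y, z), with (nabla_x phi) y = nabla_x (phi y) - phi (nabla_x y)\<close>
definition Ften :: "(nat \<Rightarrow> nat \<Rightarrow> nat \<Rightarrow> real) \<Rightarrow> (nat \<Rightarrow> real) \<Rightarrow> (nat \<Rightarrow> real) \<Rightarrow> (nat \<Rightarrow> real) \<Rightarrow> real" where
  "Ften C x y z = gm (\<lambda>k. lc_nabla C x (phi y) k - phi (lc_nabla C x y) k) z"

definition Fc :: "(nat \<Rightarrow> nat \<Rightarrow> nat \<Rightarrow> real) \<Rightarrow> nat \<Rightarrow> nat \<Rightarrow> nat \<Rightarrow> real" where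
  "Fc C i j k = Ften C (E i) (E j) (E k)"

definition F8910_shape :: "real \<Rightarrow> real \<Rightarrow> real \<Rightarrow> nat \<Rightarrow> nat \<Rightarrow> nat \<Rightarrow> real" where
  "F8910_shape l m n i j k =
     (if (i,j,k) \<in> {(1,0,1),(1,1,0),(2,0,2),(2,2,0)} then l
      else if (i,j,k) \<in> {(1,0,2),(1,2,0)} then m
      else if (i,j,k) \<in> {(2,0,1),(2,1,0)} then - m
      else if (i,j,k) \<in> {(0,1,1),(0,2,2)} then n
      else 0)"

definition in_F8_F9_F10 :: "(nat \<Rightarrow> nat \<Rightarrow> nat \<Rightarrow> real) \<Rightarrow> bool" where
  "in_F8_F9_F10 C \<longleftrightarrow>
     (\<exists>l m n. \<forall>i<3. \<forall>j<3. \<forall>k<3. Fc C i j k = F8910_shape l m n i j k)"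

definition is_Killing :: "(nat \<Rightarrow> nat \<Rightarrow> nat \<Rightarrow> real) \<Rightarrow> ((nat \<Rightarrow> real) \<Rightarrow> (nat \<Rightarrow> real) \<Rightarrow> real) \<Rightarrow> bool" where
  "is_Killing C h \<longleftrightarrow> (\<forall>x y z. h (lbr C x y) z = h x (lbr C y z))"

end

theory Submission imports Defs begin
lemma lt3: "(i::nat) < 3 \<longleftrightarrow> i = 0 \<or> i = 1 \<or> i = 2" by arith
lemma all3: "(\<forall>i<(3::nat). P i) \<longleftrightarrow> P 0 \<and> P 1 \<and> P 2"
  by (auto simp: lt3)
lemma sum3: "(\<Sum>i<(3::nat). f i) = f 0 + f 1 + f 2"
  by (simp add: eval_nat_numeral)

lemma sumE: "i < 3 \<Longrightarrow> (\<Sum>t<(3::nat). f t * E i t) = f i"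
  by (auto simp: sum3 basis_vec_def lt3)
lemma sumE': "i < 3 \<Longrightarrow> (\<Sum>t<(3::nat). E i t * f t) = f i"
  by (auto simp: sum3 basis_vec_def lt3)

lemma lbrE: "i<3 \<Longrightarrow> j<3 \<Longrightarrow> lbr C (E i) (E j) = (\<lambda>k. C i j k)"
  unfolding lbr_def by (auto simp: sum3 basis_vec_def lt3 intro!: ext)

lemma gmE: "k<3 \<Longrightarrow> gm x (E k) = sgn3 k * x k"
  unfolding gm_def by (auto simp: sum3 basis_vec_def lt3)
lemma gmE': "k<3 \<Longrightarrow> gm (E k) x = sgn3 k * x k"
  unfolding gm_def by (auto simp: sum3 basis_vec_def lt3)

definition N :: "(nat \<Rightarrow> nat \<Rightarrow> nat \<Rightarrow> real) \<Rightarrow> nat \<Rightarrow> nat \<Rightarrow> nat \<Rightarrow> real" where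
  "N C i j k = (if k<3 then sgn3 k*(sgn3 k * C i j k - sgn3 i * C j k i + sgn3 j * C k i j)/2 else 0)"

lemma nabE: "i<3 \<Longrightarrow> j<3 \<Longrightarrow> lc_nabla C (E i) (E j) = N C i j"
  unfolding lc_nabla_def N_def by (auto simp: lbrE gmE gmE' intro!: ext)

lemma nab_scale: "lc_nabla C x (\<lambda>k. c * y k) = (\<lambda>k. c * lc_nabla C x y k)"
  unfolding lc_nabla_def lbr_def gm_def
  by (auto simp: sum3 algebra_simps intro!: ext)

definition pc :: "nat \<Rightarrow> real" where "pc j = (if j = 1 then 1 else if j = 2 then -1 else 0)"
definition pj :: "nat \<Rightarrow> nat" where "pj j = (if j = 1 then 2 else if j = 2 then 1 else 0)"

lemma phiE: "j<3 \<Longrightarrow> phi (E j) = (\<lambda>k. pc j * E (pj j) k)"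
  unfolding phi_def pc_def pj_def basis_vec_def by (auto simp: lt3 intro!: ext)

lemma FcE: "i<3 \<Longrightarrow> j<3 \<Longrightarrow> k<3 \<Longrightarrow> Fc C i j k = sgn3 k * (pc j * N C i (pj j) k -
   (if k = 1 then - N C i j 2 else if k = 2 then N C i j 1 else 0))"
proof -
  assume a: "i<3" "j<3" "k<3"
  have "pj j < 3" unfolding pj_def by auto
  then show ?thesis using a unfolding Fc_def Ften_def phiE[OF a(2)] nab_scale nabE[OF a(1) \<open>pj j < 3\<close>] nabE[OF a(1) a(2)]
    by (simp add: gmE phi_def)
qed

lemma am: "assoc_metric x y = x 0 * y 0 - x 1 * y 2 - x 2 * y 1"
  unfolding assoc_metric_def gm_def phi_def eta_def sgn3_def by (simp add: sum3)

lemma Pcond: "(\<forall>i j k. i < j \<and> j < 3 \<and> k < 3 \<and>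
                (i,j,k) \<notin> {(1,2,0),(0,1,1),(0,2,2)} \<longrightarrow> (C::nat\<Rightarrow>nat\<Rightarrow>nat\<Rightarrow>real) i j k = 0)
  \<longleftrightarrow> C 0 1 0 = 0 \<and> C 0 2 0 = 0 \<and> C 0 1 2 = 0 \<and> C 0 2 1 = 0 \<and> C 1 2 1 = 0 \<and> C 1 2 2 = 0"
  (is "?L \<longleftrightarrow> ?R")
proof
  assume h: ?R
  show ?L
  proof (intro allI impI)
    fix i j k :: nat
    assume a: "i < j \<and> j < 3 \<and> k < 3 \<and> (i,j,k) \<notin> {(1,2,0),(0,1,1),(0,2,2)}"
    have "(i=0 \<and> j=1) \<or> (i=0 \<and> j=2) \<or> (i=1 \<and> j=2)" using a by arith
    moreover have "k=0 \<or> k=1 \<or> k=2" using a by arith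
    ultimately show "C i j k = 0" using a h by (elim disjE conjE) simp_all
  qed
next
  assume h: ?L
  show ?R using h[rule_format, of 0 1 0] h[rule_format, of 0 2 0] h[rule_format, of 0 1 2]
    h[rule_format, of 0 2 1] h[rule_format, of 1 2 1] h[rule_format, of 1 2 2] by simp
qed

theorem theorem2p3:
  fixes C :: "nat \<Rightarrow> nat \<Rightarrow> nat \<Rightarrow> real"
  assumes "is_structure_constants C"
  shows "(is_Killing C assoc_metric \<longleftrightarrow>
            (in_F8_F9_F10 C \<and> 2 * Fc C 1 0 1 = Fc C 1 0 2 \<and> Fc C 1 0 2 = Fc C 0 1 1))
       \<and> (is_Killing C assoc_metric \<longleftrightarrow>
            (C 1 2 0 = - C 0 1 1 \<and> - C 0 1 1 = C 0 2 2 \<and>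
             (\<forall>i j k. i < j \<and> j < 3 \<and> k < 3 \<and>
                (i,j,k) \<notin> {(1,2,0),(0,1,1),(0,2,2)} \<longrightarrow> C i j k = 0)))"
proof -
  have A: "\<And>i j k. i<3 \<Longrightarrow> j<3 \<Longrightarrow> k<3 \<Longrightarrow> C i j k = - C j i k"
    using assms unfolding is_structure_constants_def by blast
  have z: "C i i k = 0" if "i<3" "k<3" for i k using A[OF that(1) that(1) that(2)] by simp
  have S: "C 0 0 k = 0" "C 1 1 k = 0" "C 2 2 k = 0" "C 1 0 k = - C 0 1 k" "C 2 0 k = - C 0 2 k"
     "C 2 1 k = - C 1 2 k" if "k<3" for k
    using z[of 0 k] z[of 1 k] z[of 2 k] A[of 1 0 k] A[of 2 0 k] A[of 2 1 k] that by simp_all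
  have S2: "C 0 0 0 = 0" "C 1 1 0 = 0" "C 2 2 0 = 0" "C 1 0 0 = - C 0 1 0" "C 2 0 0 = - C 0 2 0"
     "C 2 1 0 = - C 1 2 0" 
     "C 0 0 1 = 0" "C 1 1 1 = 0" "C 2 2 1 = 0" "C 1 0 1 = - C 0 1 1" "C 2 0 1 = - C 0 2 1"
     "C 2 1 1 = - C 1 2 1" 
     "C 0 0 2 = 0" "C 1 1 2 = 0" "C 2 2 2 = 0" "C 1 0 2 = - C 0 1 2" "C 2 0 2 = - C 0 2 2"
     "C 2 1 2 = - C 1 2 2" using S[of 0] S[of 1] S[of 2] by auto
  define P where "P \<longleftrightarrow> C 0 1 0 = 0 \<and> C 0 2 0 = 0 \<and> C 0 1 2 = 0 \<and> C 0 2 1 = 0 \<and> C 1 2 1 = 0 \<and> C 1 2 2 = 0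
      \<and> C 0 1 1 = - C 1 2 0 \<and> C 0 2 2 = C 1 2 0"
  have K: "is_Killing C assoc_metric \<longleftrightarrow> P"
  proof
    assume k: "is_Killing C assoc_metric"
    have i: "assoc_metric (lbr C (E i) (E j)) (E k) = assoc_metric (E i) (lbr C (E j) (E k))"
      for i j k using k unfolding is_Killing_def by blast
    have "C 0 1 0 = 0" using i[of 0 0 1] by (simp add: lbrE) (simp add: am basis_vec_def S2 S2[unfolded One_nat_def])
    moreover have "C 0 2 0 = 0" using i[of 0 0 2] by (simp add: lbrE) (simp add: am basis_vec_def S2 S2[unfolded One_nat_def])
    moreover have "C 0 1 2 = 0" using i[of 0 1 1] by (simp add: lbrE) (simp add: am basis_vec_def S2 S2[unfolded One_nat_def])
    moreover have "C 0 2 1 = 0" using i[of 0 2 2] by (simp add: lbrE) (simp add: am basis_vec_def S2 S2[unfolded One_nat_def])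
    moreover have "C 1 2 2 = 0" using i[of 1 1 2] by (simp add: lbrE) (simp add: am basis_vec_def S2 S2[unfolded One_nat_def])
    moreover have "C 1 2 1 = 0" using i[of 1 2 2] by (simp add: lbrE) (simp add: am basis_vec_def S2 S2[unfolded One_nat_def])
    moreover have "C 0 1 1 = - C 1 2 0" using i[of 0 1 2] by (simp add: lbrE) (simp add: am basis_vec_def S2 S2[unfolded One_nat_def])
    moreover have "C 0 2 2 = C 1 2 0" using i[of 0 2 1] by (simp add: lbrE) (simp add: am basis_vec_def S2 S2[unfolded One_nat_def])
    ultimately show P unfolding P_def by blast
  next
    assume P
    define a where "a = C 1 2 0"
    have c: "C 0 1 0 = 0" "C 0 2 0 = 0" "C 0 1 2 = 0" "C 0 2 1 = 0" "C 1 2 1 = 0" "C 1 2 2 = 0"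
      "C 0 1 1 = - a" "C 0 2 2 = a" "C 1 2 0 = a" using \<open>P\<close> unfolding P_def a_def by auto
    have l: "lbr C x y 0 = a * (x 1 * y 2 - x 2 * y 1)"
      "lbr C x y 1 = - a * (x 0 * y 1 - x 1 * y 0)"
      "lbr C x y 2 = a * (x 0 * y 2 - x 2 * y 0)" for x y
      by (simp_all add: lbr_def sum3 S2 c S2[unfolded One_nat_def] c[unfolded One_nat_def] algebra_simps)
    show "is_Killing C assoc_metric" unfolding is_Killing_def
      by (simp add: am l l[unfolded One_nat_def] algebra_simps)
  qed
  have F: "(in_F8_F9_F10 C \<and> 2 * Fc C 1 0 1 = Fc C 1 0 2 \<and> Fc C 1 0 2 = Fc C 0 1 1) \<longleftrightarrow> P"
    unfolding in_F8_F9_F10_def all3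
    apply (simp add: FcE N_def pc_def pj_def sgn3_def F8910_shape_def S2 S2[unfolded One_nat_def])
    unfolding P_def One_nat_def by argo
  show ?thesis unfolding K F Pcond P_def by auto
qed
end
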